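(* Let $n\ge0$ and $r\ge0$ be integers, $x=(x_1,\dots,x_n)$ and $x_0=0$. Then $$\sum_{\substack{\lambda:\ l(\lambda)=r\\ \lambda_1\le n}}\ \prod_{j=1}^n\frac{1}{m_j!}\prod_{i=1}^r(n-\lambda_i-i+2)(x_{\lambda_i}-x_{\lambda_i-1})=e_r(x),$$ where the sum is over partitions $\lambda$ with exactly $r$ nonzero parts, all at most $n$, and $m_j$ is the multiplicity of the part $j$ in $\lambda$.
   Context: $e_r(x)=\sum_{1\le i_1<\cdots<i_r\le n}x_{i_1}\cdots x_{i_r}$ is the $r$th elementary symmetric polynomial ($e_0=1$, $e_r=0$ for $r>n$). $l(\lambda)$ is the number of nonzero parts of $\lambda$. *)

theory Defs
  imports Main
begin

definition esym :: "nat \<Rightarrow> nat \<Rightarrow> (nat \<Rightarrow> 'a::comm_semiring_1) \<Rightarrow> 'a" where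
  "esym n r x = (\<Sum>S \<in> {S. S \<subseteq> {1..n} \<and> card S = r}. \<Prod>i\<in>S. x i)"

text \<open>Partitions with exactly r nonzero parts, all at most n, as weakly
  decreasing lists lam = [lam_1, ..., lam_r] with entries in {1..n}.\<close>
definition bounded_partitions :: "nat \<Rightarrow> nat \<Rightarrow> nat list set" where
  "bounded_partitions n r =
     {lam. length lam = r \<and> sorted_wrt (\<ge>) lam \<and> set lam \<subseteq> {1..n}}"

end

theory Submission
  imports Defs "HOL-Computational_Algebra.Polynomial"
begin

definition wt :: "nat \<Rightarrow> (nat \<Rightarrow> 'a::field_char_0) \<Rightarrow> nat \<Rightarrow> nat list \<Rightarrow> 'a" where
  "wt n x a lam = (\<Prod>i<length lam. of_int (int n - int (lam ! i) - int (i + a + 1) + 2) *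
                      (x (lam ! i) - x (lam ! i - 1)))"

definition LL :: "nat \<Rightarrow> (nat \<Rightarrow> 'a::field_char_0) \<Rightarrow> nat \<Rightarrow> nat \<Rightarrow> nat \<Rightarrow> 'a" where
  "LL n x k a r = (\<Sum>lam \<in> bounded_partitions k r.
      (\<Prod>j=1..k. 1 / fact (count_list lam j)) * wt n x a lam)"

definition PP :: "(nat \<Rightarrow> 'a::field_char_0) \<Rightarrow> nat \<Rightarrow> 'a poly" where
  "PP x k = (\<Prod>s\<in>{1..k}. 1 + monom (x s) 1)"

definition QQ :: "nat \<Rightarrow> (nat \<Rightarrow> 'a::field_char_0) \<Rightarrow> nat \<Rightarrow> nat \<Rightarrow> 'a poly" where
  "QQ n x k a = (1 + monom (x k) 1) ^ (n - k - a) * PP x k"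

lemma wt_Cons: "wt n x a (c # l) =
   (of_int (int n - int c - int (a + 1) + 2) * (x c - x (c - 1))) * wt n x (Suc a) l"
  unfolding wt_def
  by (simp only: length_Cons prod.lessThan_Suc_shift nth_Cons_0 nth_Cons_Suc add_Suc add_Suc_right add_0)

lemma wt_rep: "wt n x a (replicate m c @ l) =
   (\<Prod>i<m. of_int (int n - int c - int (i + a + 1) + 2) * (x c - x (c - 1))) * wt n x (a + m) l"
proof (induction m arbitrary: a)
  case 0
  then show ?case by (simp add: wt_def)
next
  case (Suc m)
  show ?case
    by (simp only: replicate_Suc append_Cons wt_Cons Suc prod.lessThan_Suc_shift add_Suc add_Suc_right add_0 mult.assoc)
qed

lemma finite_bp: "finite (bounded_partitions k r)"
proof -
  have "bounded_partitions k r \<subseteq> {xs. set xs \<subseteq> {1..k} \<and> length xs = r}"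
    unfolding bounded_partitions_def by auto
  moreover have "finite {xs. set xs \<subseteq> {1..k} \<and> length xs = r}"
    by (rule finite_lists_length_eq) simp
  ultimately show ?thesis by (rule finite_subset)
qed

lemma sorted_rep: "sorted_wrt (\<ge>) (replicate m (c::nat))"
  by (induction m) auto

lemma tw_rep: "takeWhile ((=) c) (replicate m c @ l) = replicate m c @ takeWhile ((=) c) l"
  by (induction m) auto
lemma dw_rep: "dropWhile ((=) c) (replicate m c @ l) = dropWhile ((=) c) l"
  by (induction m) auto

lemma bp_split:
  "(\<Sum>lam\<in>bounded_partitions (Suc k) r. f lam) =
   (\<Sum>m\<le>r. \<Sum>l\<in>bounded_partitions k (r - m). f (replicate m (Suc k) @ l))"
proof -
  have "(\<Sum>m\<le>r. \<Sum>l\<in>bounded_partitions k (r - m). f (replicate m (Suc k) @ l))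
      = (\<Sum>(m,l)\<in>Sigma {..r} (\<lambda>m. bounded_partitions k (r - m)). f (replicate m (Suc k) @ l))"
    by (rule sum.Sigma) (auto simp: finite_bp)
  also have "\<dots> = (\<Sum>lam\<in>bounded_partitions (Suc k) r. f lam)"
  proof (rule sum.reindex_bij_witness[where i="\<lambda>lam. (length (takeWhile ((=) (Suc k)) lam), dropWhile ((=) (Suc k)) lam)"
        and j="\<lambda>(m,l). replicate m (Suc k) @ l"])
    fix a assume a: "a \<in> Sigma {..r} (\<lambda>m. bounded_partitions k (r - m))"
    then obtain m l where al: "a = (m,l)" "m \<le> r" "l \<in> bounded_partitions k (r - m)" by auto
    then have nl: "Suc k \<notin> set l" unfolding bounded_partitions_def by auto
    have tw: "takeWhile ((=) (Suc k)) l = []" "dropWhile ((=) (Suc k)) l = l"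
      using nl by (cases l; auto)+
    show "(length (takeWhile ((=) (Suc k)) (case a of (m, l) \<Rightarrow> replicate m (Suc k) @ l)),
          dropWhile ((=) (Suc k)) (case a of (m, l) \<Rightarrow> replicate m (Suc k) @ l)) = a"
      using al tw tw_rep[where m=m and c="Suc k" and l=l] dw_rep[where m=m and c="Suc k" and l=l] by simp
    show "(case a of (m, l) \<Rightarrow> replicate m (Suc k) @ l) \<in> bounded_partitions (Suc k) r"
      using al unfolding bounded_partitions_def
      by (auto simp: sorted_wrt_append sorted_rep)
    show "f (case a of (m, l) \<Rightarrow> replicate m (Suc k) @ l) = (case a of (m, l) \<Rightarrow> f (replicate m (Suc k) @ l))"
      using al by simp
  next
    fix lam assume lam: "lam \<in> bounded_partitions (Suc k) r"
    define t where "t = takeWhile ((=) (Suc k)) lam"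
    define d where "d = dropWhile ((=) (Suc k)) lam"
    have td: "lam = t @ d" unfolding t_def d_def by simp
    have trep: "t = replicate (length t) (Suc k)"
      unfolding t_def by (metis (mono_tags) replicate_length_same set_takeWhileD)
    have srt: "sorted_wrt (\<ge>) d" "set d \<subseteq> {1..Suc k}" "length lam = r"
      using lam td unfolding bounded_partitions_def by (auto simp: sorted_wrt_append)
    have nd: "Suc k \<notin> set d"
    proof
      assume "Suc k \<in> set d"
      then obtain d0 ds where "d = d0 # ds" by (cases d) auto
      moreover have "d0 \<noteq> Suc k" using \<open>d = d0 # ds\<close> unfolding d_def
        by (metis hd_dropWhile list.discI list.sel(1))
      ultimately show False using srt \<open>Suc k \<in> set d\<close> by auto
    qed
    have dbp: "d \<in> bounded_partitions k (r - length t)"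
      using srt nd td unfolding bounded_partitions_def
      by (auto simp: subset_iff) (metis atLeastAtMost_iff le_Suc_eq)+
    show "(case (length (takeWhile ((=) (Suc k)) lam), dropWhile ((=) (Suc k)) lam) of (m, l) \<Rightarrow> replicate m (Suc k) @ l) = lam"
      unfolding t_def[symmetric] d_def[symmetric] using td trep by simp
    show "(length (takeWhile ((=) (Suc k)) lam), dropWhile ((=) (Suc k)) lam) \<in> Sigma {..r} (\<lambda>m. bounded_partitions k (r - m))"
      unfolding t_def[symmetric] d_def[symmetric] using dbp td srt by auto
  qed
  finally show ?thesis by simp
qed

lemma count_rep: "count_list (replicate m c) j = (if c = j then m else 0)"
  by (induction m) auto

lemma cnt:
  assumes "l \<in> bounded_partitions k s"
  shows "(\<Prod>j=1..Suc k. 1 / fact (count_list (replicate m (Suc k) @ l) j) :: 'a::field_char_0)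
       = 1 / fact m * (\<Prod>j=1..k. 1 / fact (count_list l j))"
proof -
  have nl: "count_list l (Suc k) = 0" using assms unfolding bounded_partitions_def
    by (auto simp: count_list_0_iff)
  have "(\<Prod>j=1..k. 1 / fact (count_list (replicate m (Suc k) @ l) j) :: 'a)
       = (\<Prod>j=1..k. 1 / fact (count_list l j))"
    by (rule prod.cong) (auto simp: count_rep)
  then show ?thesis using nl by (simp add: prod.cl_ivl_Suc count_rep mult.commute)
qed

lemma ffact: "(\<Prod>i<m. (of_int (int N - int i) :: 'a::field_char_0)) = of_nat (N choose m) * fact m"
proof (induction m)
  case 0
  then show ?case by simp
next
  case (Suc m)
  have e: "(N choose Suc m) * Suc m = (N choose m) * (N - m)"
    by (metis One_nat_def binomial_absorb_comp diff_Suc_1' less_Suc_eq_0_disj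
      mult.commute times_binomial_minus1_eq)
  have "(\<Prod>i<Suc m. (of_int (int N - int i) :: 'a)) = of_nat (N choose m) * fact m * of_int (int N - int m)"
    using Suc by simp
  also have "\<dots> = of_nat (N choose Suc m) * fact (Suc m)"
  proof (cases "m \<le> N")
    case True
    then have "(of_int (int N - int m) :: 'a) = of_nat (N - m)" by (simp add: of_nat_diff)
    moreover have "(of_nat (N choose Suc m) * fact (Suc m) :: 'a) = of_nat ((N choose Suc m) * Suc m) * fact m"
      by (simp only: fact_Suc of_nat_mult) (simp add: ac_simps)
    moreover have "(of_nat ((N choose Suc m) * Suc m) :: 'a) = of_nat ((N choose m) * (N - m))"
      using e by simp
    ultimately show ?thesis by (simp add: ac_simps)
  next
    case False
    then show ?thesis by (simp add: binomial_eq_0)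
  qed
  finally show ?case .
qed

lemma LL_Suc: "LL n x (Suc k) a r = (\<Sum>m\<le>r.
     ((\<Prod>i<m. of_int (int n - int (Suc k) - int (i + a + 1) + 2)) * (x (Suc k) - x k) ^ m / fact m)
     * LL n x k (a + m) (r - m))"
  unfolding LL_def
  apply (subst bp_split)
  apply (rule sum.cong[OF refl])
  apply (subst sum_distrib_left)
  apply (rule sum.cong[OF refl])
  apply (subst cnt, assumption)
  apply (subst wt_rep)
  apply (simp add: prod.distrib)
  done

lemma coeff_bin: "coeff (of_nat c * monom y 1 ^ m * q) r =
   (if r < m then 0 else of_nat c * y ^ m * coeff q (r - m))"
proof -
  have "of_nat c * monom y 1 ^ m = monom (of_nat c * y ^ m) m"
    by (simp add: monom_power of_nat_poly monom_0[symmetric] mult_monom)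
  then show ?thesis by (simp add: coeff_monom_mult)
qed

lemma bp0: "bounded_partitions 0 r = (if r = 0 then {[]} else {})"
  unfolding bounded_partitions_def by auto

lemma key:
  fixes x :: "nat \<Rightarrow> 'a::field_char_0"
  assumes x0: "x 0 = 0"
  shows "a + k \<le> n \<Longrightarrow> LL n x k a r = coeff (QQ n x k a) r"
proof (induction k arbitrary: a r)
  case 0
  then show ?case using x0 by (simp add: LL_def QQ_def PP_def wt_def bp0)
next
  case (Suc k)
  define N where "N = n - k - a"
  define y where "y = x (Suc k) - x k"
  define g where "g m = of_nat (N choose m) * y ^ m * coeff (QQ n x k (a + m)) (r - m)" for m
  have N1: "N \<ge> 1" using Suc.prems N_def by auto
  have L: "LL n x (Suc k) a r = (\<Sum>m\<le>r. g m)"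
    unfolding LL_Suc
  proof (rule sum.cong[OF refl])
    fix m assume "m \<in> {..r}"
    have e: "\<And>i. int n - int (Suc k) - int (i + a + 1) + 2 = int N - int i"
      using Suc.prems N_def by auto
    have p: "(\<Prod>i<m. (of_int (int n - int (Suc k) - int (i + a + 1) + 2) :: 'a)) = of_nat (N choose m) * fact m"
      unfolding e by (rule ffact)
    show "(\<Prod>i<m. of_int (int n - int (Suc k) - int (i + a + 1) + 2)) * (x (Suc k) - x k) ^ m / fact m *
         LL n x k (a + m) (r - m) = g m"
    proof (cases "m \<le> N")
      case True
      then have "LL n x k (a + m) (r - m) = coeff (QQ n x k (a + m)) (r - m)"
        using Suc.IH Suc.prems N_def by auto
      then show ?thesis unfolding p g_def y_def by simp
    next
      case False
      then show ?thesis unfolding p g_def by (simp add: binomial_eq_0)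
    qed
  qed
  have Q: "QQ n x (Suc k) a = (\<Sum>m\<le>N. of_nat (N choose m) * monom y 1 ^ m * QQ n x k (a + m))"
  proof -
    have "QQ n x (Suc k) a = (1 + monom (x (Suc k)) 1) ^ N * PP x k"
    proof -
      have nn: "n - Suc k - a = N - 1" "N = Suc (N - 1)" using N1 N_def by auto
      have "PP x (Suc k) = PP x k * (1 + monom (x (Suc k)) 1)"
        unfolding PP_def by (simp add: prod.cl_ivl_Suc)
      then have "QQ n x (Suc k) a = ((1 + monom (x (Suc k)) 1) ^ (N - 1) * (1 + monom (x (Suc k)) 1)) * PP x k"
        unfolding QQ_def nn(1) by (simp add: ac_simps)
      also have "(1 + monom (x (Suc k)) 1) ^ (N - 1) * (1 + monom (x (Suc k)) 1) = (1 + monom (x (Suc k)) 1) ^ N"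
        by (subst (2) nn(2)) (simp only: power_Suc2)
      finally show ?thesis .
    qed
    also have "1 + monom (x (Suc k)) 1 = monom y 1 + (1 + monom (x k) 1)"
    proof -
      have "monom (x (Suc k)) 1 = monom y 1 + monom (x k) 1"
        unfolding add_monom y_def by simp
      then show ?thesis by (simp add: algebra_simps)
    qed
    also have "(monom y 1 + (1 + monom (x k) 1)) ^ N * PP x k =
       (\<Sum>m\<le>N. of_nat (N choose m) * monom y 1 ^ m * ((1 + monom (x k) 1) ^ (N - m) * PP x k))"
      by (simp add: binomial_ring sum_distrib_right mult.assoc)
    also have "\<dots> = (\<Sum>m\<le>N. of_nat (N choose m) * monom y 1 ^ m * QQ n x k (a + m))"
      unfolding QQ_def N_def by (simp add: diff_diff_add add.assoc)
    finally show ?thesis .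
  qed
  have R: "coeff (QQ n x (Suc k) a) r = (\<Sum>m\<le>N. if m \<le> r then g m else 0)"
    unfolding Q coeff_sum coeff_bin g_def by (rule sum.cong) auto
  have g0: "m > N \<Longrightarrow> g m = 0" for m unfolding g_def by (simp add: binomial_eq_0)
  have "(\<Sum>m\<le>r. g m) = (\<Sum>m\<le>r + N. if m \<le> r then g m else 0)"
    by (rule sum.mono_neutral_cong_left) auto
  also have "\<dots> = (\<Sum>m\<le>N. if m \<le> r then g m else 0)"
    by (rule sum.mono_neutral_cong_right) (auto simp: g0)
  finally show ?case using L R by simp
qed

lemma prod_monom: "finite B \<Longrightarrow> (\<Prod>b\<in>B. monom (x b) 1) = monom (\<Prod>b\<in>B. x b) (card B)"
  by (induction B rule: finite_induct) (auto simp: mult_monom)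

lemma PP_esym: "coeff (PP x n) r = esym n r x"
proof -
  have "PP x n = (\<Prod>s\<in>{1..n}. monom (x s) 1 + 1)" unfolding PP_def by (simp add: add.commute)
  also have "\<dots> = (\<Sum>B\<in>Pow {1..n}. monom (\<Prod>b\<in>B. x b) (card B))"
  proof -
    have fin: "\<And>B. B \<subseteq> {1..n} \<Longrightarrow> finite B" by (rule finite_subset) auto
    show ?thesis
      apply (subst prod_add, simp)
      apply (rule sum.cong[OF refl])
      apply (subst prod_monom)
      using fin apply blast
      apply simp
      done
  qed
  finally have "coeff (PP x n) r = (\<Sum>B\<in>Pow {1..n}. if card B = r then (\<Prod>b\<in>B. x b) else 0)"
    by (simp add: coeff_sum coeff_monom)
  also have "\<dots> = (\<Sum>B\<in>{B \<in> Pow {1..n}. card B = r}. \<Prod>b\<in>B. x b)"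
    by (rule sum.inter_filter[symmetric]) simp
  also have "{B \<in> Pow {1..n}. card B = r} = {S. S \<subseteq> {1..n} \<and> card S = r}" by auto
  finally show ?thesis unfolding esym_def .
qed

theorem mainTheorem11:
  fixes n r :: nat and x :: "nat \<Rightarrow> 'a::field_char_0"
  assumes "x 0 = 0"
  shows "(\<Sum>lam \<in> bounded_partitions n r.
            (\<Prod>j=1..n. 1 / fact (count_list lam j)) *
            (\<Prod>i<r. of_int (int n - int (lam ! i) - int (i + 1) + 2) *
                      (x (lam ! i) - x (lam ! i - 1))))
         = esym n r x"
proof -
  have "(\<Sum>lam \<in> bounded_partitions n r.
            (\<Prod>j=1..n. 1 / fact (count_list lam j)) *
            (\<Prod>i<r. of_int (int n - int (lam ! i) - int (i + 1) + 2) *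
                      (x (lam ! i) - x (lam ! i - 1)))) = LL n x n 0 r"
    unfolding LL_def wt_def by (rule sum.cong) (auto simp: bounded_partitions_def)
  also have "\<dots> = coeff (QQ n x n 0) r" using key[where x=x and a=0 and k=n and n=n and r=r] assms by simp
  also have "\<dots> = esym n r x" by (simp add: QQ_def PP_esym)
  finally show ?thesis .
qed

end
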